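(* Let $G=(V,E)$ be a simple planar bipartite undirected graph whose edges are each colored Red or Blue, and let $M$ be a perfect matching of $G$ containing an odd number of Red edges. Define the weighted directed graph $H$ on vertex set $V$ as follows: $(u,v)$ is an edge of $H$ if and only if there is $x\in V$ with $\{u,x\}\in M$ and $\{x,v\}\in E\setminus M$; its weight $w(u,v)$ is $0$ if $\{u,x\}$ and $\{x,v\}$ have the same color and $1$ otherwise. Then $G$ has a perfect matching containing an even number of Red edges if and only if $H$ contains a directed cycle of odd total weight.
   Context: A perfect matching is a set of pairwise vertex-disjoint edges covering every vertex. The weight of a directed cycle is the sum of the weights of its edges. (Since $M$ is perfect, for each $u$ the vertex $x$ with $\{u,x\}\in M$ is unique.) *)

theory Defs
  imports "HOL-Analysis.Analysis"
begin

datatype color = Red | Blue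

definition simple_graph :: "'a set \<Rightarrow> 'a set set \<Rightarrow> bool" where
  "simple_graph V E \<longleftrightarrow> finite V \<and> (\<forall>e\<in>E. \<exists>u v. e = {u, v} \<and> u \<noteq> v \<and> u \<in> V \<and> v \<in> V)"

definition bipartite :: "'a set \<Rightarrow> 'a set set \<Rightarrow> bool" where
  "bipartite V E \<longleftrightarrow> (\<exists>A B. A \<inter> B = {} \<and> A \<union> B = V \<and>
      (\<forall>e\<in>E. \<exists>a b. a \<in> A \<and> b \<in> B \<and> e = {a, b}))"

definition planar :: "'a set \<Rightarrow> 'a set set \<Rightarrow> bool" where
  "planar V E \<longleftrightarrow> (\<exists>(pos :: 'a \<Rightarrow> complex) (\<gamma> :: 'a set \<Rightarrow> real \<Rightarrow> complex).
      inj_on pos V \<and>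
      (\<forall>e\<in>E. arc (\<gamma> e) \<and> (\<exists>u v. e = {u, v} \<and> pathstart (\<gamma> e) = pos u \<and>
           pathfinish (\<gamma> e) = pos v \<and> path_image (\<gamma> e) \<inter> pos ` V = {pos u, pos v})) \<and>
      (\<forall>e\<in>E. \<forall>e'\<in>E. e \<noteq> e' \<longrightarrow>
           path_image (\<gamma> e) \<inter> path_image (\<gamma> e') \<subseteq> pos ` (e \<inter> e')))"

definition perfect_matching :: "'a set \<Rightarrow> 'a set set \<Rightarrow> 'a set set \<Rightarrow> bool" where
  "perfect_matching V E M \<longleftrightarrow> M \<subseteq> E \<and>
      (\<forall>e\<in>M. \<forall>e'\<in>M. e \<noteq> e' \<longrightarrow> e \<inter> e' = {}) \<and> \<Union>M = V"

definition red_count :: "('a set \<Rightarrow> color) \<Rightarrow> 'a set set \<Rightarrow> nat" where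
  "red_count col M = card {e \<in> M. col e = Red}"

definition H_edge :: "'a set \<Rightarrow> 'a set set \<Rightarrow> 'a set set \<Rightarrow> 'a \<Rightarrow> 'a \<Rightarrow> bool" where
  "H_edge V E M u v \<longleftrightarrow> (\<exists>x\<in>V. {u, x} \<in> M \<and> {x, v} \<in> E - M)"

definition H_weight :: "('a set \<Rightarrow> color) \<Rightarrow> 'a set set \<Rightarrow> 'a \<Rightarrow> 'a \<Rightarrow> nat" where
  "H_weight col M u v = (let x = (THE x. {u, x} \<in> M) in
      if col {u, x} = col {x, v} then 0 else 1)"

definition H_cycle :: "'a set \<Rightarrow> 'a set set \<Rightarrow> 'a set set \<Rightarrow> 'a list \<Rightarrow> bool" where
  "H_cycle V E M cs \<longleftrightarrow> cs \<noteq> [] \<and> distinct cs \<and> set cs \<subseteq> V \<and>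
     (\<forall>i<length cs. H_edge V E M (cs ! i) (cs ! ((i + 1) mod length cs)))"

definition cycle_weight :: "('a set \<Rightarrow> color) \<Rightarrow> 'a set set \<Rightarrow> 'a list \<Rightarrow> nat" where
  "cycle_weight col M cs = (\<Sum>i<length cs. H_weight col M (cs ! i) (cs ! ((i + 1) mod length cs)))"

end

theory Submission
  imports Defs
begin


definition pt :: "'a set set \<Rightarrow> 'a \<Rightarrow> 'a" where "pt N u = (THE x. {u,x} \<in> N)"

lemma sg_edge: "simple_graph V E \<Longrightarrow> e \<in> E \<Longrightarrow> \<exists>a b. e = {a,b} \<and> a \<noteq> b \<and> a \<in> V \<and> b \<in> V"
  unfolding simple_graph_def by blast

lemma sg_finite: "simple_graph V E \<Longrightarrow> finite E"
proof -
  assume s: "simple_graph V E"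
  have "E \<subseteq> Pow V" using sg_edge[OF s] by blast
  moreover have "finite V" using s unfolding simple_graph_def by blast
  ultimately show ?thesis by (meson finite_Pow_iff finite_subset)
qed

lemma sg_pair: "simple_graph V E \<Longrightarrow> {u,x} \<in> E \<Longrightarrow> u \<noteq> x \<and> u \<in> V \<and> x \<in> V"
  using sg_edge[of V E "{u,x}"] by (auto simp: doubleton_eq_iff)

context
  fixes V :: "'a set" and E N
  assumes sg: "simple_graph V E" and pm: "perfect_matching V E N"
begin

lemma NE: "N \<subseteq> E" using pm unfolding perfect_matching_def by blast
lemma Ndisj: "e \<in> N \<Longrightarrow> e' \<in> N \<Longrightarrow> e \<noteq> e' \<Longrightarrow> e \<inter> e' = {}" using pm unfolding perfect_matching_def by blast
lemma Ncov: "\<Union>N = V" using pm unfolding perfect_matching_def by blast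

lemma pm_unique: "{u,x} \<in> N \<Longrightarrow> {u,y} \<in> N \<Longrightarrow> x = y"
proof -
  assume a: "{u,x} \<in> N" "{u,y} \<in> N"
  then have "{u,x} = {u,y}" using Ndisj by blast
  moreover have "u \<noteq> x" using sg_pair[OF sg] a NE by blast
  ultimately show ?thesis by (auto simp: doubleton_eq_iff)
qed

lemma pm_exists: "u \<in> V \<Longrightarrow> \<exists>x. {u,x} \<in> N"
proof -
  assume "u \<in> V"
  then obtain e where e: "e \<in> N" "u \<in> e" using Ncov by blast
  then obtain a b where "e = {a,b}" using sg_edge[OF sg] NE by blast
  then show ?thesis using e by (auto simp: insert_commute)
qed

lemma pt_mem: "u \<in> V \<Longrightarrow> {u, pt N u} \<in> N"
proof -
  assume u: "u \<in> V"
  have "\<exists>!x. {u,x} \<in> N" using pm_exists[OF u] pm_unique by blast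
  then show ?thesis unfolding pt_def by (rule theI')
qed

lemma pt_eq: "{u,x} \<in> N \<Longrightarrow> pt N u = x"
  unfolding pt_def using pm_unique by blast

lemma pt_ne: "u \<in> V \<Longrightarrow> pt N u \<noteq> u"
  using pt_mem[of u] sg_pair[OF sg, of u "pt N u"] NE by (metis subsetD)

lemma pt_V: "u \<in> V \<Longrightarrow> pt N u \<in> V"
  using pt_mem[of u] sg_pair[OF sg, of u "pt N u"] NE by (metis subsetD)

lemma pt_pt: "u \<in> V \<Longrightarrow> pt N (pt N u) = u"
proof -
  assume u: "u \<in> V"
  have "{pt N u, u} \<in> N" using pt_mem[OF u] by (simp add: insert_commute)
  then show ?thesis by (rule pt_eq)
qed

lemma pm_edge: "e \<in> N \<Longrightarrow> z \<in> e \<Longrightarrow> e = {z, pt N z}"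
proof -
  assume e: "e \<in> N" "z \<in> e"
  then obtain a b where ab: "e = {a,b}" using sg_edge[OF sg] NE by blast
  show ?thesis
  proof (cases "z = a")
    case True then show ?thesis using ab e pt_eq by auto
  next
    case False then have "z = b" "e = {b,a}" using ab e by auto
    then show ?thesis using e pt_eq by auto
  qed
qed

lemma Nfinite: "finite N" using sg_finite[OF sg] NE finite_subset by blast

end

lemma side:
  assumes "A \<inter> B = {}" "A \<union> B = V" "\<forall>e\<in>E. \<exists>a b. a \<in> A \<and> b \<in> B \<and> e = {a, b}" "{x,y} \<in> E"
  shows "(x \<in> A) \<longleftrightarrow> (y \<notin> A)"
proof -
  obtain a b where ab: "a \<in> A" "b \<in> B" "{x,y} = {a,b}" using assms(3,4) by blast
  then have "(x = a \<and> y = b) \<or> (x = b \<and> y = a)" by (simp add: doubleton_eq_iff)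
  then show ?thesis using assms(1) ab(1,2) by blast
qed

lemma weight_parity:
  fixes a b :: "'i \<Rightarrow> color"
  assumes that: "finite I"
  shows "(\<Sum>i\<in>I. (if a i = b i then 0 else 1::nat)) + 2 * card {i\<in>I. a i = Red \<and> b i = Red}
     = card {i\<in>I. a i = Red} + card {i\<in>I. b i = Red}"
proof -
  have c: "\<And>P. card {i\<in>I. P i} = (\<Sum>i\<in>I. if P i then 1 else 0::nat)"
    using that by (simp add: sum.If_cases Int_def)
  have "(if a i = b i then 0 else 1::nat) + 2 * (if a i = Red \<and> b i = Red then 1 else 0)
     = (if a i = Red then 1 else 0) + (if b i = Red then 1 else 0)" for i
    by (cases "a i"; cases "b i") auto
  then have "(\<Sum>i\<in>I. (if a i = b i then 0 else 1::nat) + 2 * (if a i = Red \<and> b i = Red then 1 else 0))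
     = (\<Sum>i\<in>I. (if a i = Red then 1 else 0) + (if b i = Red then 1 else 0))" by simp
  then show ?thesis unfolding c sum.distrib sum_distrib_left[symmetric] by simp
qed

lemma funpow_in: "u \<in> S \<Longrightarrow> \<sigma> ` S \<subseteq> S \<Longrightarrow> (\<sigma>^^i) u \<in> S"
  by (induction i) auto

lemma funpow_cancel: "inj_on \<sigma> S \<Longrightarrow> \<sigma> ` S \<subseteq> S \<Longrightarrow> a \<in> S \<Longrightarrow> b \<in> S \<Longrightarrow> (\<sigma>^^i) a = (\<sigma>^^i) b \<Longrightarrow> a = b"
proof (induction i arbitrary: a b)
  case 0 then show ?case by simp
next
  case (Suc i)
  have "(\<sigma>^^i) (\<sigma> a) = (\<sigma>^^i) (\<sigma> b)" using Suc.prems by (simp add: funpow_Suc_right del: funpow.simps)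
  then have "\<sigma> a = \<sigma> b" using Suc by blast
  then show ?case using Suc.prems inj_onD by metis
qed

lemma funpow_split: "a \<le> b \<Longrightarrow> (f^^b) x = (f^^a) ((f^^(b-a)) x)"
proof -
  assume "a \<le> b"
  then have "(f^^b) x = (f^^(a + (b-a))) x" by simp
  also have "\<dots> = (f^^a) ((f^^(b-a)) x)" by (simp only: funpow_add comp_apply)
  finally show ?thesis .
qed

lemma funpow_return:
  assumes "finite S" "\<sigma> ` S \<subseteq> S" "inj_on \<sigma> S" "u \<in> S"
  shows "\<exists>k>0. (\<sigma>^^k) u = u"
proof -
  have "\<not> inj_on (\<lambda>i. (\<sigma>^^i) u) {..card S}"
  proof
    assume "inj_on (\<lambda>i. (\<sigma>^^i) u) {..card S}"
    then have "card ((\<lambda>i. (\<sigma>^^i) u) ` {..card S}) = card S + 1" by (simp add: card_image)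
    moreover have "(\<lambda>i. (\<sigma>^^i) u) ` {..card S} \<subseteq> S" using funpow_in[OF assms(4,2)] by blast
    then have "card ((\<lambda>i. (\<sigma>^^i) u) ` {..card S}) \<le> card S" by (rule card_mono[OF assms(1)])
    ultimately show False by simp
  qed
  then obtain i j where ij: "i \<noteq> j" "(\<sigma>^^i) u = (\<sigma>^^j) u" unfolding inj_on_def by blast
  obtain a b where ab: "a < b" "(\<sigma>^^a) u = (\<sigma>^^b) u"
  proof (cases "i < j")
    case True then show ?thesis using ij that[of i j] by simp
  next
    case False then have "j < i" using ij by simp
    then show ?thesis using ij that[of j i] by simp
  qed
  have sp: "(\<sigma>^^b) u = (\<sigma>^^a) ((\<sigma>^^(b-a)) u)" by (rule funpow_split) (use ab in simp)
  have "(\<sigma>^^a) ((\<sigma>^^(b-a)) u) = (\<sigma>^^a) u" by (simp only: ab(2) sp)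
  then have "(\<sigma>^^(b-a)) u = u" by (rule funpow_cancel[OF assms(3,2) funpow_in[OF assms(4,2)] assms(4)])
  then show ?thesis using ab by (intro exI[of _ "b-a"]) auto
qed

lemma orbit_odd:
  fixes \<sigma> :: "'a \<Rightarrow> 'a" and g :: "'a \<Rightarrow> nat"
  assumes "finite S" "\<sigma> ` S \<subseteq> S" "inj_on \<sigma> S" "odd (\<Sum>u\<in>S. g u)"
  shows "\<exists>u\<in>S. \<exists>k>0. inj_on (\<lambda>i. (\<sigma>^^i) u) {..<k} \<and> (\<sigma>^^k) u = u \<and> odd (\<Sum>i<k. g ((\<sigma>^^i) u))"
  using assms
proof (induction "card S" arbitrary: S rule: less_induct)
  case less
  then have "S \<noteq> {}" by auto
  then obtain u where u: "u \<in> S" by blast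
  define k where "k = (LEAST k. 0 < k \<and> (\<sigma>^^k) u = u)"
  have kk: "0 < k \<and> (\<sigma>^^k) u = u" unfolding k_def
    using funpow_return[OF less.prems(1-3) u] by (metis (mono_tags, lifting) LeastI)
  have inj: "inj_on (\<lambda>i. (\<sigma>^^i) u) {..<k}"
  proof (rule inj_onI, rule ccontr)
    fix i j assume ij: "i \<in> {..<k}" "j \<in> {..<k}" "(\<sigma>^^i) u = (\<sigma>^^j) u" "i \<noteq> j"
    obtain a b where ab: "a < b" "b < k" "(\<sigma>^^a) u = (\<sigma>^^b) u"
    proof (cases "i < j")
      case True then show ?thesis using ij that[of i j] by simp
    next
      case False then have "j < i" using ij by simp
      then show ?thesis using ij that[of j i] by simp
    qed
    have sp: "(\<sigma>^^b) u = (\<sigma>^^a) ((\<sigma>^^(b-a)) u)" by (rule funpow_split) (use ab in simp)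
    have "(\<sigma>^^a) ((\<sigma>^^(b-a)) u) = (\<sigma>^^a) u" by (simp only: ab(3) sp)
    then have "(\<sigma>^^(b-a)) u = u" by (rule funpow_cancel[OF less.prems(3,2) funpow_in[OF u less.prems(2)] u])
    moreover have "b - a < k" "0 < b - a" using ab by auto
    ultimately show False unfolding k_def by (metis (mono_tags, lifting) not_less_Least k_def)
  qed
  define Ob where "Ob = (\<lambda>i. (\<sigma>^^i) u) ` {..<k}"
  have OS: "Ob \<subseteq> S" unfolding Ob_def using funpow_in[OF u less.prems(2)] by blast
  have uO: "u \<in> Ob" unfolding Ob_def using kk by (auto intro: image_eqI[of _ _ 0])
  have sumS: "(\<Sum>v\<in>S. g v) = (\<Sum>v\<in>Ob. g v) + (\<Sum>v\<in>S-Ob. g v)"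
    using sum.subset_diff[OF OS less.prems(1)] by (simp add: add.commute)
  have sumO: "(\<Sum>v\<in>Ob. g v) = (\<Sum>i<k. g ((\<sigma>^^i) u))"
    unfolding Ob_def using sum.reindex[OF inj] by simp
  show ?case
  proof (cases "odd (\<Sum>v\<in>Ob. g v)")
    case True then show ?thesis using u kk inj sumO by auto
  next
    case False
    then have odd2: "odd (\<Sum>v\<in>S-Ob. g v)" using sumS less.prems(4) by simp
    have inv: "\<sigma> ` (S-Ob) \<subseteq> S-Ob"
    proof
      fix y assume "y \<in> \<sigma> ` (S-Ob)"
      then obtain v where v: "v \<in> S" "v \<notin> Ob" "y = \<sigma> v" by blast
      have "y \<in> S" using v less.prems(2) by blast
      moreover have "y \<notin> Ob"
      proof
        assume "y \<in> Ob"
        then obtain i where i: "i < k" "y = (\<sigma>^^i) u" unfolding Ob_def by blast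
        obtain j where j: "j < k" "(\<sigma>^^i) u = \<sigma> ((\<sigma>^^j) u)"
        proof (cases i)
          case 0
          have "(\<sigma>^^i) u = (\<sigma>^^(Suc (k-1))) u" using kk 0 by simp
          also have "\<dots> = \<sigma> ((\<sigma>^^(k-1)) u)" by simp
          finally have "(\<sigma>^^i) u = \<sigma> ((\<sigma>^^(k-1)) u)" .
          moreover have "k-1 < k" using kk by simp
          ultimately show ?thesis by (rule that[rotated])
        next
          case (Suc i') then show ?thesis using i that[of i'] by auto
        qed
        then have "\<sigma> v = \<sigma> ((\<sigma>^^j) u)" using v i by simp
        then have "v = (\<sigma>^^j) u"
          using v(1) less.prems(3) funpow_in[OF u less.prems(2)] by (simp add: inj_on_eq_iff)
        then show False using v j unfolding Ob_def by blast
      qed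
      ultimately show "y \<in> S - Ob" by blast
    qed
    have "S - Ob \<subset> S" using uO u by blast
    then have "card (S - Ob) < card S" using less.prems(1) by (simp add: psubset_card_mono)
    then obtain u' where "u' \<in> S - Ob" "\<exists>k>0. inj_on (\<lambda>i. (\<sigma>^^i) u') {..<k} \<and> (\<sigma>^^k) u' = u' \<and> odd (\<Sum>i<k. g ((\<sigma>^^i) u'))"
      using less.hyps[of "S - Ob", OF _ finite_Diff[OF less.prems(1)] inv inj_on_diff[OF less.prems(3)] odd2] by blast
    then show ?thesis by blast
  qed
qed

lemma card_filter_image: "inj_on f D \<Longrightarrow> f ` D = X \<Longrightarrow> card {u\<in>D. P (f u)} = card {e\<in>X. P e}"
proof -
  assume a: "inj_on f D" "f ` D = X"
  have "{e\<in>X. P e} = f ` {u\<in>D. P (f u)}" using a(2) by blast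
  moreover have "inj_on f {u\<in>D. P (f u)}" using a(1) by (rule inj_on_subset) blast
  ultimately show ?thesis by (simp add: card_image)
qed

lemma card_filter_split: "finite X \<Longrightarrow> card {e\<in>X. P e} = card {e\<in>X\<inter>Y. P e} + card {e\<in>X-Y. P e}"
proof -
  assume f: "finite X"
  have "{e\<in>X. P e} = {e\<in>X\<inter>Y. P e} \<union> {e\<in>X-Y. P e}" by blast
  moreover have "{e\<in>X\<inter>Y. P e} \<inter> {e\<in>X-Y. P e} = {}" by blast
  ultimately show ?thesis using f by (simp add: card_Un_disjoint)
qed



lemma parity_aux: "(W::nat) + 2*K = R1 + R2 \<Longrightarrow> odd (C + R1) \<Longrightarrow> even (C + R2) \<Longrightarrow> odd W"
proof -
  assume a: "W + 2*K = R1 + R2" "odd (C + R1)" "even (C + R2)"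
  have "even (W + 2*K) \<longleftrightarrow> even (R1 + R2)" using a(1) by simp
  then show "odd W" using a(2,3) by (simp add: even_add) blast
qed

lemma dir2:
  fixes V :: "'a set" and E M M' :: "'a set set" and col :: "'a set \<Rightarrow> color"
  assumes sg: "simple_graph V E"
    and AB: "A \<inter> B = {}" "A \<union> B = V" "\<forall>e\<in>E. \<exists>a b. a \<in> A \<and> b \<in> B \<and> e = {a, b}"
    and pmM: "perfect_matching V E M" and pmM': "perfect_matching V E M'"
    and oddM: "odd (red_count col M)" and evM': "even (red_count col M')"
  shows "\<exists>cs. H_cycle V E M cs \<and> odd (cycle_weight col M cs)"
proof -
  define p where "p = pt M"
  define q where "q = pt M'"
  define \<sigma> where "\<sigma> u = q (p u)" for u
  define D where "D = {u\<in>A. \<sigma> u \<noteq> u}"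
  define w where "w u = (if col {u, p u} = col {p u, \<sigma> u} then 0 else 1::nat)" for u
  have AV: "A \<subseteq> V" using AB by blast
  have sd: "{x,y} \<in> E \<Longrightarrow> (x \<in> A) \<longleftrightarrow> (y \<notin> A)" for x y using side[OF AB] .
  have ME: "M \<subseteq> E" "M' \<subseteq> E" using NE[OF sg pmM] NE[OF sg pmM'] .
  have pmem: "u \<in> V \<Longrightarrow> {u, p u} \<in> M" for u unfolding p_def using pt_mem[OF sg pmM] .
  have qmem: "u \<in> V \<Longrightarrow> {u, q u} \<in> M'" for u unfolding q_def using pt_mem[OF sg pmM'] .
  have peq: "{u,x} \<in> M \<Longrightarrow> p u = x" for u x unfolding p_def using pt_eq[OF sg pmM] .
  have qeq: "{u,x} \<in> M' \<Longrightarrow> q u = x" for u x unfolding q_def using pt_eq[OF sg pmM'] .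
  have pV: "u \<in> V \<Longrightarrow> p u \<in> V" for u unfolding p_def using pt_V[OF sg pmM] .
  have qV: "u \<in> V \<Longrightarrow> q u \<in> V" for u unfolding q_def using pt_V[OF sg pmM'] .
  have pp: "u \<in> V \<Longrightarrow> p (p u) = u" for u unfolding p_def using pt_pt[OF sg pmM] .
  have qq: "u \<in> V \<Longrightarrow> q (q u) = u" for u unfolding q_def using pt_pt[OF sg pmM'] .
  have pA: "u \<in> V \<Longrightarrow> (p u \<in> A) \<longleftrightarrow> (u \<notin> A)" for u using sd[of u "p u"] pmem ME by blast
  have qA: "u \<in> V \<Longrightarrow> (q u \<in> A) \<longleftrightarrow> (u \<notin> A)" for u using sd[of u "q u"] qmem ME by blast
  have sV: "u \<in> V \<Longrightarrow> \<sigma> u \<in> V" for u unfolding \<sigma>_def using pV qV by blast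
  have sA: "u \<in> V \<Longrightarrow> (\<sigma> u \<in> A) \<longleftrightarrow> (u \<in> A)" for u unfolding \<sigma>_def using pA qA pV by blast
  have sfix: "u \<in> V \<Longrightarrow> (\<sigma> u = u) \<longleftrightarrow> {p u, u} \<in> M'" for u
    unfolding \<sigma>_def using qeq qmem pV by metis
  have sinj: "u \<in> V \<Longrightarrow> v \<in> V \<Longrightarrow> \<sigma> u = \<sigma> v \<Longrightarrow> u = v" for u v
    unfolding \<sigma>_def using pV qq pp by metis
  have DV: "D \<subseteq> V" unfolding D_def using AV by blast
  have finV: "finite V" using sg unfolding simple_graph_def by blast
  have finD: "finite D" using finite_subset[OF DV finV] .
  have sD: "\<sigma> ` D \<subseteq> D"
  proof
    fix y assume "y \<in> \<sigma> ` D"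
    then obtain u where u: "u \<in> D" "y = \<sigma> u" by blast
    then have uV: "u \<in> V" "u \<in> A" "\<sigma> u \<noteq> u" using DV D_def by auto
    have "\<sigma> (\<sigma> u) \<noteq> \<sigma> u" using sinj[OF sV[OF uV(1)] uV(1)] uV(3) by blast
    then show "y \<in> D" using u uV sA sV unfolding D_def by blast
  qed
  have sinjD: "inj_on \<sigma> D" using sinj DV by (meson inj_onI subsetD)
  have f1inj: "inj_on (\<lambda>u. {u, p u}) D"
  proof (rule inj_onI)
    fix u v assume uv: "u \<in> D" "v \<in> D" "{u, p u} = {v, p v}"
    then have "u \<in> A" "v \<in> A" "v \<in> V" using D_def DV by auto
    then have "u \<noteq> p v" using pA by blast
    then show "u = v" using uv(3) by (auto simp: doubleton_eq_iff)
  qed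
  have f1img: "(\<lambda>u. {u, p u}) ` D = M - M'"
  proof
    show "(\<lambda>u. {u, p u}) ` D \<subseteq> M - M'"
    proof
      fix e assume "e \<in> (\<lambda>u. {u, p u}) ` D"
      then obtain u where u: "u \<in> D" "e = {u, p u}" by blast
      then have uV: "u \<in> V" and ne: "\<sigma> u \<noteq> u" using D_def DV by auto
      have "{p u, u} \<notin> M'" using sfix[OF uV] ne by simp
      then have "{u, p u} \<notin> M'" by (simp add: insert_commute)
      then show "e \<in> M - M'" using u(2) pmem[OF uV] by simp
    qed
  next
    show "M - M' \<subseteq> (\<lambda>u. {u, p u}) ` D"
    proof
      fix e assume e: "e \<in> M - M'"
      then have "e \<in> E" using ME by blast
      then obtain a b where ab: "a \<in> A" "b \<in> B" "e = {a,b}" using AB(3) by blast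
      have aV: "a \<in> V" using ab(1) AV by blast
      have ea: "e = {a, p a}" unfolding p_def using pm_edge[OF sg pmM, of e a] e ab(3) by simp
      then have "{p a, a} \<notin> M'" using e by (simp add: insert_commute)
      then have "\<sigma> a \<noteq> a" using sfix[OF aV] by simp
      then have "a \<in> D" using ab(1) D_def by simp
      then show "e \<in> (\<lambda>u. {u, p u}) ` D" using ea by blast
    qed
  qed
  have f2inj: "inj_on (\<lambda>u. {p u, \<sigma> u}) D"
  proof (rule inj_onI)
    fix u v assume uv: "u \<in> D" "v \<in> D" "{p u, \<sigma> u} = {p v, \<sigma> v}"
    then have uu: "u \<in> A" "v \<in> A" "v \<in> V" "u \<in> V" using D_def DV by auto
    have "p u \<notin> A" using pA[OF uu(4)] uu(1) by simp
    moreover have "\<sigma> v \<in> A" using sA[OF uu(3)] uu(2) by simp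
    ultimately have "p u \<noteq> \<sigma> v" by auto
    moreover have "(p u = p v \<and> \<sigma> u = \<sigma> v) \<or> (p u = \<sigma> v \<and> \<sigma> u = p v)"
      using uv(3) by (simp add: doubleton_eq_iff)
    ultimately have "p u = p v" by blast
    then have "p (p u) = p (p v)" by simp
    then show "u = v" using pp[OF uu(4)] pp[OF uu(3)] by simp
  qed
  have f2img: "(\<lambda>u. {p u, \<sigma> u}) ` D = M' - M"
  proof
    show "(\<lambda>u. {p u, \<sigma> u}) ` D \<subseteq> M' - M"
    proof
      fix e assume "e \<in> (\<lambda>u. {p u, \<sigma> u}) ` D"
      then obtain u where u: "u \<in> D" "e = {p u, \<sigma> u}" by blast
      then have uV: "u \<in> V" "\<sigma> u \<noteq> u" using D_def DV by auto
      have "e \<in> M'" using u(2) qmem[OF pV[OF uV(1)]] unfolding \<sigma>_def by simp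
      moreover have "e \<notin> M"
      proof
        assume "e \<in> M"
        then have "p (p u) = \<sigma> u" using peq u(2) by blast
        then show False using pp[OF uV(1)] uV(2) by simp
      qed
      ultimately show "e \<in> M' - M" by blast
    qed
  next
    show "M' - M \<subseteq> (\<lambda>u. {p u, \<sigma> u}) ` D"
    proof
      fix e assume e: "e \<in> M' - M"
      then have "e \<in> E" using ME by blast
      then obtain a b where ab: "a \<in> A" "b \<in> B" "e = {a,b}" using AB(3) by blast
      have bV: "b \<in> V" using ab(2) AB(2) by blast
      have bA: "b \<notin> A" using ab(2) AB(1) by blast
      have eb: "e = {b, q b}" unfolding q_def using pm_edge[OF sg pmM', of e b] e ab(3) by simp
      have "{a,b} = {b, q b}" using eb ab(3) by simp
      then have qb: "q b = a" using ab(1) bA by (auto simp: doubleton_eq_iff)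
      define u where "u = p b"
      have uV: "u \<in> V" "u \<in> A" using pV[OF bV] pA[OF bV] bA unfolding u_def by auto
      have pu: "p u = b" using pp bV u_def by simp
      have su: "\<sigma> u = a" using pu qb \<sigma>_def by simp
      have "a \<noteq> u"
      proof
        assume "a = u"
        then have "e = {p b, b}" using ab(3) u_def by simp
        then have "e = {b, p b}" by (simp add: insert_commute)
        then show False using e pmem[OF bV] by simp
      qed
      then have "u \<in> D" using su uV D_def by auto
      moreover have "e = {p u, \<sigma> u}" using pu su ab by (auto simp: insert_commute)
      ultimately show "e \<in> (\<lambda>u. {p u, \<sigma> u}) ` D" by blast
    qed
  qed
  have finM: "finite M" "finite M'" using Nfinite[OF sg pmM] Nfinite[OF sg pmM'] .
  have r1: "card {u\<in>D. col {u, p u} = Red} = card {e\<in>M-M'. col e = Red}"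
    using card_filter_image[OF f1inj f1img, of "\<lambda>e. col e = Red"] .
  have r2: "card {u\<in>D. col {p u, \<sigma> u} = Red} = card {e\<in>M'-M. col e = Red}"
    using card_filter_image[OF f2inj f2img, of "\<lambda>e. col e = Red"] .
  have rM: "red_count col M = card {e\<in>M\<inter>M'. col e = Red} + card {e\<in>M-M'. col e = Red}"
    unfolding red_count_def using card_filter_split[OF finM(1)] .
  have rM': "red_count col M' = card {e\<in>M\<inter>M'. col e = Red} + card {e\<in>M'-M. col e = Red}"
  proof -
    have "M' \<inter> M = M \<inter> M'" by blast
    then show ?thesis unfolding red_count_def using card_filter_split[OF finM(2), of "\<lambda>e. col e = Red" M] by simp
  qed
  have wp: "(\<Sum>u\<in>D. w u) + 2 * card {u\<in>D. col {u, p u} = Red \<and> col {p u, \<sigma> u} = Red}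
     = card {u\<in>D. col {u, p u} = Red} + card {u\<in>D. col {p u, \<sigma> u} = Red}"
    unfolding w_def using weight_parity[OF finD, of "\<lambda>u. col {u, p u}" "\<lambda>u. col {p u, \<sigma> u}"] .
  have oddw: "odd (\<Sum>u\<in>D. w u)"
    using parity_aux[OF wp] r1 r2 rM rM' oddM evM' by simp
  obtain u k where u: "u \<in> D" and k: "k > 0" "inj_on (\<lambda>i. (\<sigma>^^i) u) {..<k}" "(\<sigma>^^k) u = u"
    and ow: "odd (\<Sum>i<k. w ((\<sigma>^^i) u))"
    using orbit_odd[OF finD sD sinjD oddw] by blast
  define cs where "cs = map (\<lambda>i. (\<sigma>^^i) u) [0..<k]"
  have len: "length cs = k" unfolding cs_def by simp
  have nth: "i < k \<Longrightarrow> cs ! i = (\<sigma>^^i) u" for i unfolding cs_def by simp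
  have nxt: "i < k \<Longrightarrow> cs ! ((i+1) mod k) = \<sigma> (cs ! i)" for i
  proof -
    assume i: "i < k"
    show ?thesis
    proof (cases "i + 1 < k")
      case True then show ?thesis using nth i by simp
    next
      case False then have "i + 1 = k" using i by simp
      then have "(i+1) mod k = 0" by simp
      then have "cs ! ((i+1) mod k) = u" using nth k(1) by simp
      also have "u = (\<sigma>^^(Suc i)) u" using k(3) \<open>i+1 = k\<close> by simp
      finally show ?thesis using nth i by simp
    qed
  qed
  have inD: "i < k \<Longrightarrow> cs ! i \<in> D" for i using nth funpow_in[OF u sD] by simp
  have edge: "v \<in> D \<Longrightarrow> H_edge V E M v (\<sigma> v)" for v
  proof -
    assume v: "v \<in> D"
    then have vV: "v \<in> V" using DV by blast
    have "{p v, \<sigma> v} \<in> M' - M" using f2img v by blast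
    then have "{p v, \<sigma> v} \<in> E - M" using ME by blast
    then show ?thesis unfolding H_edge_def using pmem[OF vV] pV[OF vV] by blast
  qed
  have wt: "v \<in> D \<Longrightarrow> H_weight col M v (\<sigma> v) = w v" for v
    unfolding H_weight_def w_def p_def pt_def by simp
  have "H_cycle V E M cs"
    unfolding H_cycle_def
  proof (intro conjI allI impI)
    show "cs \<noteq> []" using len k by auto
    show "distinct cs" unfolding cs_def distinct_map using k(2) by (simp add: atLeast0LessThan)
    show "set cs \<subseteq> V"
    proof
      fix x assume "x \<in> set cs"
      then obtain i where i: "i < length cs" "x = cs ! i" by (metis in_set_conv_nth)
      then have "x \<in> D" using inD[of i] len by simp
      with DV show "x \<in> V" by (rule subsetD)
    qed
    fix i assume i: "i < length cs"
    then have "cs ! ((i+1) mod length cs) = \<sigma> (cs ! i)" using nxt len by simp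
    then show "H_edge V E M (cs ! i) (cs ! ((i + 1) mod length cs))" using edge[OF inD[of i]] i len by simp
  qed
  moreover have "cycle_weight col M cs = (\<Sum>i<k. w ((\<sigma>^^i) u))"
    unfolding cycle_weight_def len
  proof (rule sum.cong)
    fix i assume "i \<in> {..<k}"
    then have i: "i < k" by simp
    have "H_weight col M (cs ! i) (cs ! ((i + 1) mod k)) = H_weight col M (cs ! i) (\<sigma> (cs ! i))"
      using nxt[OF i] by simp
    also have "\<dots> = w (cs ! i)" using wt[OF inD[OF i]] .
    finally show "H_weight col M (cs ! i) (cs ! ((i + 1) mod k)) = w ((\<sigma>^^i) u)" using nth[OF i] by simp
  qed simp
  ultimately show ?thesis using ow by (intro exI[of _ cs]) simp
qed



lemma parity_aux2: "(W::nat) + 2*K = R1 + R2 \<Longrightarrow> odd W \<Longrightarrow> odd (C + R1) \<Longrightarrow> even (C + R2)"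
proof -
  assume a: "W + 2*K = R1 + R2" "odd W" "odd (C + R1)"
  have "even (W + 2*K) \<longleftrightarrow> even (R1 + R2)" using a(1) by simp
  then show "even (C + R2)" using a(2,3) by (simp add: even_add)
qed

lemma dir1:
  fixes V :: "'a set" and E M :: "'a set set" and col :: "'a set \<Rightarrow> color"
  assumes sg: "simple_graph V E"
    and AB: "A \<inter> B = {}" "A \<union> B = V" "\<forall>e\<in>E. \<exists>a b. a \<in> A \<and> b \<in> B \<and> e = {a, b}"
    and pmM: "perfect_matching V E M"
    and oddM: "odd (red_count col M)"
    and cyc: "H_cycle V E M cs" and ow: "odd (cycle_weight col M cs)"
  shows "\<exists>M'. perfect_matching V E M' \<and> even (red_count col M')"
proof -
  define p where "p = pt M"
  define n where "n = length cs"
  define c where "c i = cs ! i" for i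
  define nx where "nx i = (i + 1) mod n" for i
  have sd: "{x,y} \<in> E \<Longrightarrow> (x \<in> A) \<longleftrightarrow> (y \<notin> A)" for x y using side[OF AB] .
  have ME: "M \<subseteq> E" using NE[OF sg pmM] .
  have pmem: "u \<in> V \<Longrightarrow> {u, p u} \<in> M" for u unfolding p_def using pt_mem[OF sg pmM] .
  have peq: "{u,x} \<in> M \<Longrightarrow> p u = x" for u x unfolding p_def using pt_eq[OF sg pmM] .
  have pV: "u \<in> V \<Longrightarrow> p u \<in> V" for u unfolding p_def using pt_V[OF sg pmM] .
  have pp: "u \<in> V \<Longrightarrow> p (p u) = u" for u unfolding p_def using pt_pt[OF sg pmM] .
  have pA: "u \<in> V \<Longrightarrow> (p u \<in> A) \<longleftrightarrow> (u \<notin> A)" for u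
  proof -
    assume u: "u \<in> V"
    have "{u, p u} \<in> E" using pmem[OF u] ME by (rule subsetD[rotated])
    then show ?thesis using sd by auto
  qed
  have npos: "n > 0" using cyc unfolding H_cycle_def n_def by simp
  have cV: "i < n \<Longrightarrow> c i \<in> V" for i using cyc unfolding H_cycle_def n_def c_def
    by (meson nth_mem subsetD)
  have nxn: "i < n \<Longrightarrow> nx i < n" for i unfolding nx_def using npos by simp
  have nxe: "i < n \<Longrightarrow> nx i = (if i + 1 = n then 0 else i + 1)" for i unfolding nx_def by simp
  have he: "i < n \<Longrightarrow> {p (c i), c (nx i)} \<in> E \<and> {p (c i), c (nx i)} \<notin> M" for i
  proof -
    assume i: "i < n"
    then have "H_edge V E M (c i) (c (nx i))" using cyc unfolding H_cycle_def n_def c_def nx_def by simp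
    then obtain x where x: "{c i, x} \<in> M" "{x, c (nx i)} \<in> E - M" unfolding H_edge_def by blast
    have "p (c i) = x" using peq[OF x(1)] .
    then show ?thesis using x(2) by simp
  qed
  have cside: "i < n \<Longrightarrow> (c i \<in> A) = (c 0 \<in> A)" for i
  proof (induction i)
    case 0 then show ?case by simp
  next
    case (Suc i)
    then have i: "i < n" by simp
    have nxi: "nx i = Suc i" using nxe[OF i] Suc.prems by simp
    have "(c (Suc i) \<in> A) \<longleftrightarrow> (p (c i) \<notin> A)" using sd[OF conjunct1[OF he[OF i]]] nxi by simp
    also have "\<dots> \<longleftrightarrow> (c i \<in> A)" using pA[OF cV[OF i]] by simp
    finally show ?case using Suc.IH i by simp
  qed
  have pc_ne: "i < n \<Longrightarrow> j < n \<Longrightarrow> p (c i) \<noteq> c j" for i j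
  proof
    assume ij: "i < n" "j < n" "p (c i) = c j"
    have "(p (c i) \<in> A) \<longleftrightarrow> (c i \<notin> A)" using pA[OF cV[OF ij(1)]] .
    then show False using ij cside[OF ij(1)] cside[OF ij(2)] by simp
  qed
  have cinj: "i < n \<Longrightarrow> j < n \<Longrightarrow> c i = c j \<Longrightarrow> i = j" for i j
    using cyc unfolding H_cycle_def n_def c_def by (simp add: nth_eq_iff_index_eq)
  have pcinj: "i < n \<Longrightarrow> j < n \<Longrightarrow> p (c i) = p (c j) \<Longrightarrow> i = j" for i j
  proof -
    assume ij: "i < n" "j < n" "p (c i) = p (c j)"
    then have "p (p (c i)) = p (p (c j))" by simp
    then have "c i = c j" using pp[OF cV[OF ij(1)]] pp[OF cV[OF ij(2)]] by simp
    then show "i = j" using cinj ij by simp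
  qed
  have nxinj: "i < n \<Longrightarrow> j < n \<Longrightarrow> nx i = nx j \<Longrightarrow> i = j" for i j
    using nxe[of i] nxe[of j] by (auto split: if_splits)
  have nxsurj: "j < n \<Longrightarrow> \<exists>i<n. nx i = j" for j
  proof -
    assume j: "j < n"
    show ?thesis
    proof (cases j)
      case 0 then show ?thesis using nxe[of "n-1"] npos by (intro exI[of _ "n-1"]) auto
    next
      case (Suc j') then show ?thesis using nxe[of j'] j by (intro exI[of _ j']) auto
    qed
  qed
  define R where "R = (\<lambda>i. {c i, p (c i)}) ` {..<n}"
  define N where "N = (\<lambda>i. {p (c i), c (nx i)}) ` {..<n}"
  define M' where "M' = (M - R) \<union> N"
  have RM: "R \<subseteq> M" unfolding R_def using pmem cV by auto
  have NE': "N \<subseteq> E" "N \<inter> M = {}" unfolding N_def using he by auto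
  have key1: "e \<in> M - R \<Longrightarrow> i < n \<Longrightarrow> e \<inter> {p (c i), c (nx i)} = {}" for e i
  proof (rule ccontr)
    assume a: "e \<in> M - R" "i < n" "e \<inter> {p (c i), c (nx i)} \<noteq> {}"
    then obtain z where z: "z \<in> e" "z = p (c i) \<or> z = c (nx i)" by blast
    have ez: "e = {z, p z}" unfolding p_def using pm_edge[OF sg pmM, of e z] a(1) z(1) by simp
    show False
    proof (cases "z = p (c i)")
      case True
      then have "e = {p (c i), c i}" using ez pp[OF cV[OF a(2)]] by simp
      then have "e = {c i, p (c i)}" by (simp add: insert_commute)
      then have "e \<in> R" unfolding R_def using a(2) by blast
      then show False using a(1) by simp
    next
      case False
      then have "z = c (nx i)" using z(2) by simp
      then have "e = {c (nx i), p (c (nx i))}" using ez by simp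
      then have "e \<in> R" unfolding R_def using nxn[OF a(2)] by blast
      then show False using a(1) by simp
    qed
  qed
  have key2: "i < n \<Longrightarrow> j < n \<Longrightarrow> i \<noteq> j \<Longrightarrow> {p (c i), c (nx i)} \<inter> {p (c j), c (nx j)} = {}" for i j
  proof -
    assume ij: "i < n" "j < n" "i \<noteq> j"
    have 1: "p (c i) \<noteq> p (c j)" using pcinj ij by auto
    have 2: "p (c i) \<noteq> c (nx j)" using pc_ne ij nxn by auto
    have 3: "c (nx i) \<noteq> p (c j)" using pc_ne ij nxn by metis
    have 4: "c (nx i) \<noteq> c (nx j)" using cinj nxinj nxn ij by metis
    show ?thesis using 1 2 3 4 by auto
  qed
  have pmM': "perfect_matching V E M'"
    unfolding perfect_matching_def
  proof (intro conjI ballI impI)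
    show "M' \<subseteq> E" unfolding M'_def using ME NE' by auto
  next
    fix e e' assume ee: "e \<in> M'" "e' \<in> M'" "e \<noteq> e'"
    show "e \<inter> e' = {}"
    proof (cases "e \<in> N")
      case True
      then obtain i where i: "i < n" "e = {p (c i), c (nx i)}" unfolding N_def by blast
      show ?thesis
      proof (cases "e' \<in> N")
        case True
        then obtain j where j: "j < n" "e' = {p (c j), c (nx j)}" unfolding N_def by blast
        then have "i \<noteq> j" using i ee(3) by auto
        then show ?thesis using key2 i j by simp
      next
        case False
        then have "e' \<in> M - R" using ee(2) unfolding M'_def by simp
        then show ?thesis using key1[of e' i] i by (simp add: Int_commute)
      qed
    next
      case False
      then have e: "e \<in> M - R" using ee(1) unfolding M'_def by simp
      show ?thesis
      proof (cases "e' \<in> N")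
        case True
        then obtain j where j: "j < n" "e' = {p (c j), c (nx j)}" unfolding N_def by blast
        then show ?thesis using key1[OF e j(1)] by simp
      next
        case False
        then have "e' \<in> M - R" using ee(2) unfolding M'_def by simp
        then show ?thesis using Ndisj[OF sg pmM] e ee(3) by simp
      qed
    qed
  next
    show "\<Union>M' = V"
    proof
      show "\<Union>M' \<subseteq> V"
      proof
        fix v assume "v \<in> \<Union>M'"
        then obtain e where e: "e \<in> M'" "v \<in> e" by blast
        have "e \<in> E" using e(1) ME NE' unfolding M'_def by auto
        then obtain a b where "e = {a,b}" "a \<in> V" "b \<in> V" using sg_edge[OF sg] by metis
        then show "v \<in> V" using e(2) by auto
      qed
    next
      show "V \<subseteq> \<Union>M'"
      proof
        fix v assume v: "v \<in> V"
        show "v \<in> \<Union>M'"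
        proof (cases "{v, p v} \<in> R")
          case False
          then have "{v, p v} \<in> M'" using pmem[OF v] unfolding M'_def by simp
          then show ?thesis by auto
        next
          case True
          then obtain i where i: "i < n" "{v, p v} = {c i, p (c i)}" unfolding R_def by blast
          then have "v = c i \<or> v = p (c i)" by (auto simp: doubleton_eq_iff)
          then show ?thesis
          proof
            assume "v = p (c i)"
            then have "v \<in> {p (c i), c (nx i)}" "{p (c i), c (nx i)} \<in> M'"
              unfolding M'_def N_def using i(1) by auto
            then show ?thesis by (rule UnionI[rotated])
          next
            assume vc: "v = c i"
            obtain j where j: "j < n" "nx j = i" using nxsurj[OF i(1)] by blast
            then have "v \<in> {p (c j), c (nx j)}" "{p (c j), c (nx j)} \<in> M'"
              unfolding M'_def N_def using vc by auto
            then show ?thesis by (rule UnionI[rotated])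
          qed
        qed
      qed
    qed
  qed
  have finM: "finite M" using Nfinite[OF sg pmM] .
  have finN: "finite N" unfolding N_def by simp
  have finM': "finite M'" unfolding M'_def using finM finN by simp
  have f1inj: "inj_on (\<lambda>i. {c i, p (c i)}) {..<n}"
  proof (rule inj_onI)
    fix i j assume ij: "i \<in> {..<n}" "j \<in> {..<n}" "{c i, p (c i)} = {c j, p (c j)}"
    have "c i \<noteq> p (c j)" using pc_ne ij(1,2) by (metis lessThan_iff)
    then have "c i = c j" using ij(3) by (auto simp: doubleton_eq_iff)
    then show "i = j" using cinj ij(1,2) by simp
  qed
  have f2inj: "inj_on (\<lambda>i. {p (c i), c (nx i)}) {..<n}"
  proof (rule inj_onI)
    fix i j assume ij: "i \<in> {..<n}" "j \<in> {..<n}" "{p (c i), c (nx i)} = {p (c j), c (nx j)}"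
    have "p (c i) \<noteq> c (nx j)" using pc_ne nxn ij(1,2) by (metis lessThan_iff)
    then have "p (c i) = p (c j)" using ij(3) by (auto simp: doubleton_eq_iff)
    then show "i = j" using pcinj ij(1,2) by simp
  qed
  have rR: "card {i\<in>{..<n}. col {c i, p (c i)} = Red} = card {e\<in>R. col e = Red}"
    using card_filter_image[OF f1inj R_def[symmetric], of "\<lambda>e. col e = Red"] .
  have rN: "card {i\<in>{..<n}. col {p (c i), c (nx i)} = Red} = card {e\<in>N. col e = Red}"
    using card_filter_image[OF f2inj N_def[symmetric], of "\<lambda>e. col e = Red"] .
  have rM: "red_count col M = card {e\<in>R. col e = Red} + card {e\<in>M-R. col e = Red}"
  proof -
    have "M \<inter> R = R" using RM by blast
    then show ?thesis unfolding red_count_def using card_filter_split[OF finM, of "\<lambda>e. col e = Red" R] by simp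
  qed
  have rM': "red_count col M' = card {e\<in>N. col e = Red} + card {e\<in>M-R. col e = Red}"
  proof -
    have "M' \<inter> N = N" unfolding M'_def by blast
    moreover have "M' - N = M - R" unfolding M'_def using NE'(2) by blast
    ultimately show ?thesis unfolding red_count_def using card_filter_split[OF finM', of "\<lambda>e. col e = Red" N] by simp
  qed
  have cw: "cycle_weight col M cs = (\<Sum>i\<in>{..<n}. if col {c i, p (c i)} = col {p (c i), c (nx i)} then 0 else 1)"
    unfolding cycle_weight_def H_weight_def n_def[symmetric] c_def nx_def p_def pt_def Let_def by simp
  have wp: "cycle_weight col M cs + 2 * card {i\<in>{..<n}. col {c i, p (c i)} = Red \<and> col {p (c i), c (nx i)} = Red}
     = card {i\<in>{..<n}. col {c i, p (c i)} = Red} + card {i\<in>{..<n}. col {p (c i), c (nx i)} = Red}"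
    unfolding cw using weight_parity[of "{..<n}" "\<lambda>i. col {c i, p (c i)}" "\<lambda>i. col {p (c i), c (nx i)}"] by simp
  have "even (red_count col M')"
    unfolding rM' using parity_aux2[OF wp ow] oddM unfolding rM rR rN by (simp add: add.commute)
  then show ?thesis using pmM' by blast
qed


theorem mainTheorem13:
  fixes V :: "'a set" and E :: "'a set set" and col :: "'a set \<Rightarrow> color" and M :: "'a set set"
  assumes "simple_graph V E" and "planar V E" and "bipartite V E"
    and "perfect_matching V E M" and "odd (red_count col M)"
  shows "(\<exists>M'. perfect_matching V E M' \<and> even (red_count col M')) \<longleftrightarrow>
         (\<exists>cs. H_cycle V E M cs \<and> odd (cycle_weight col M cs))"
proof -
  obtain A B where AB: "A \<inter> B = {}" "A \<union> B = V" "\<forall>e\<in>E. \<exists>a b. a \<in> A \<and> b \<in> B \<and> e = {a, b}"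
    using assms(3) unfolding bipartite_def by blast
  show ?thesis
  proof
    assume "\<exists>M'. perfect_matching V E M' \<and> even (red_count col M')"
    then obtain M' where "perfect_matching V E M'" "even (red_count col M')" by blast
    then show "\<exists>cs. H_cycle V E M cs \<and> odd (cycle_weight col M cs)"
      using dir2[OF assms(1) AB assms(4)] assms(5) by blast
  next
    assume "\<exists>cs. H_cycle V E M cs \<and> odd (cycle_weight col M cs)"
    then obtain cs where "H_cycle V E M cs" "odd (cycle_weight col M cs)" by blast
    then show "\<exists>M'. perfect_matching V E M' \<and> even (red_count col M')"
      using dir1[OF assms(1) AB assms(4) assms(5)] by blast
  qed
qed

end
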